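(* For $i\in\mathbb{Z}_{>0}$ and $\epsilon>0$, the inclusion $\mathbb{CP}^n\times\mathbb{CP}^n\times\{i\pi+\epsilon\}\to Z_i$ is a homotopy equivalence.
   Context: $\mathbb{CP}^n$ has the Fubini–Study metric (Kähler form $\sum2\sqrt{-1}h_{ij}dz_i\wedge d\bar z_j$, $h_{ij}=\frac{(1+\sum_k|z_k|^2)\delta_{ij}-\bar z_iz_j}{(1+\sum_k|z_k|^2)^2}$), geodesic distance $\mathrm{dist}$, diameter $\pi$. For $x\in\mathbb{CP}^n$, $D_x=\{y\mid\mathrm{dist}(x,y)=\pi\}$. For $i>0$, $Z_i\subset\mathbb{CP}^n\times\mathbb{CP}^n\times\mathbb{R}$ is $\{(x,y,t)\mid\mathrm{dist}(x,y)<t-(i-1)\pi\}$ if $i$ is odd and $\{(x,y,t)\mid\mathrm{dist}(x,D_y)<t-(i-1)\pi\}$ if $i$ is even. *)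

theory Defs
  imports "HOL-Analysis.Analysis"
begin

text \<open>Model of CP^n: a point [u] (u a unit vector of C^(n+1), the index type 'n having
  n+1 elements) is represented by the rank-one orthogonal projection u u^*.\<close>

definition proj_of :: "complex^'n \<Rightarrow> complex^'n^'n" where
  "proj_of u = (\<chi> i j. u $ i * cnj (u $ j))"

definition CP :: "(complex^'n^'n) set" where
  "CP = {P. \<exists>u. norm u = 1 \<and> P = proj_of u}"

text \<open>Fubini-Study geodesic distance, normalised so that the diameter is pi:
  dist([u],[v]) = 2 arccos |<u,v>| for unit u, v; note trace (uu^* vv^*) = |<u,v>|^2.\<close>

definition fs_dist :: "complex^'n^'n \<Rightarrow> complex^'n^'n \<Rightarrow> real" where
  "fs_dist P Q = 2 * arccos (sqrt (Re (trace (P ** Q))))"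

definition Dset :: "complex^'n^'n \<Rightarrow> (complex^'n^'n) set" where
  "Dset x = {y \<in> CP. fs_dist x y = pi}"

definition fs_setdist :: "complex^'n^'n \<Rightarrow> (complex^'n^'n) set \<Rightarrow> real" where
  "fs_setdist x A = Inf (fs_dist x ` A)"

definition Zset :: "nat \<Rightarrow> ((complex^'n^'n) \<times> (complex^'n^'n) \<times> real) set" where
  "Zset i = {(x, y, t) | x y t. x \<in> CP \<and> y \<in> CP \<and>
      (if odd i then fs_dist x y < t - (real i - 1) * pi
       else fs_setdist x (Dset y) < t - (real i - 1) * pi)}"

definition homotopy_equivalence_map ::
  "'a topology \<Rightarrow> 'b topology \<Rightarrow> ('a \<Rightarrow> 'b) \<Rightarrow> bool" where
  "homotopy_equivalence_map X Y f \<longleftrightarrow> continuous_map X Y f \<and>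
     (\<exists>g. continuous_map Y X g \<and>
          homotopic_with (\<lambda>_. True) X X (g \<circ> f) id \<and>
          homotopic_with (\<lambda>_. True) Y Y (f \<circ> g) id)"

end

theory Submission
  imports Defs
begin

definition ip :: "complex^'n \<Rightarrow> complex^'n \<Rightarrow> complex" where
  "ip u v = (\<Sum>j\<in>UNIV. cnj (u$j) * v$j)"

lemma trace_proj: "trace (proj_of u ** proj_of v) = ip u v * cnj (ip u v)"
proof -
  have "trace (proj_of u ** proj_of v) = (\<Sum>i\<in>UNIV. \<Sum>k\<in>UNIV. u$i * cnj (u$k) * (v$k * cnj (v$i)))"
    by (simp add: trace_def matrix_matrix_mult_def proj_of_def)
  also have "\<dots> = (\<Sum>k\<in>UNIV. \<Sum>i\<in>UNIV. (cnj (u$k) * v$k) * (u$i * cnj (v$i)))"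
    by (subst sum.swap) (simp add: algebra_simps)
  also have "\<dots> = ip u v * cnj (ip u v)"
    by (simp add: ip_def sum_product)
  finally show ?thesis .
qed

lemma ip_bound: fixes u v :: "complex^'n" assumes "norm u = 1" "norm v = 1" shows "cmod (ip u v) \<le> 1"
proof -
  define a :: "real^'n" where "a = (\<chi> j. cmod (u$j))"
  define b :: "real^'n" where "b = (\<chi> j. cmod (v$j))"
  have na: "norm a = norm u" unfolding a_def norm_vec_def by simp
  have nb: "norm b = norm v" unfolding b_def norm_vec_def by simp
  have "cmod (ip u v) \<le> (\<Sum>j\<in>UNIV. cmod (cnj (u$j) * v$j))"
    unfolding ip_def by (rule norm_sum)
  also have "\<dots> = inner a b" by (simp add: a_def b_def inner_vec_def norm_mult)
  also have "\<dots> \<le> norm a * norm b" by (rule norm_cauchy_schwarz)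
  finally show ?thesis using na nb assms by simp
qed

lemma fs_dist_proj: "fs_dist (proj_of u) (proj_of v) = 2 * arccos (cmod (ip u v))"
proof -
  have "Re (trace (proj_of u ** proj_of v)) = (cmod (ip u v))^2"
    by (simp add: trace_proj complex_mult_cnj cmod_power2)
  then show ?thesis by (simp add: fs_dist_def)
qed

lemma fs_dist_bounds: assumes "x \<in> CP" "y \<in> CP" shows "0 \<le> fs_dist x y" "fs_dist x y \<le> pi"
proof -
  obtain u v where u: "norm u = 1" "x = proj_of u" and v: "norm v = 1" "y = proj_of v"
    using assms unfolding CP_def by auto
  have b: "cmod (ip u v) \<le> 1" using ip_bound u v by auto
  have "-1 \<le> cmod (ip u v)" using norm_ge_zero[of "ip u v"] by linarith
  then show "0 \<le> fs_dist x y" using b u v arccos_lbound[of "cmod (ip u v)"] by (simp add: fs_dist_proj)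
  show "fs_dist x y \<le> pi" using b u v arccos_le_pi2[of "cmod (ip u v)"] by (simp add: fs_dist_proj)
qed

lemma orth_exists:
  fixes u :: "complex^'n"
  assumes "CARD('n) \<ge> 2"
  shows "\<exists>v. norm v = 1 \<and> ip u v = 0"
proof -
  obtain a b :: 'n where ab: "a \<noteq> b"
    using assms by (metis card_2_iff' card_le_Suc_iff numeral_2_eq_2 ex_in_conv UNIV_I)
  show ?thesis
  proof (cases "u$a = 0 \<and> u$b = 0")
    case True
    have "ip u (axis a 1) = 0"
      unfolding ip_def axis_def using True by (simp add: if_distrib cong: if_cong)
    moreover have "norm (axis a (1::complex)) = 1"
    proof -
      have "(\<Sum>i\<in>UNIV. (norm ((axis a (1::complex))$i))^2) = (\<Sum>i\<in>UNIV. if i = a then 1 else (0::real))"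
        by (rule sum.cong) (auto simp: axis_def)
      then show ?thesis unfolding norm_vec_def L2_set_def by simp
    qed
    ultimately show ?thesis by blast
  next
    case False
    define w :: "complex^'n" where "w = (\<chi> k. if k = a then cnj (u$b) else if k = b then - cnj (u$a) else 0)"
    have sw: "(\<Sum>k\<in>UNIV. f k) = f a + f b" if "\<And>k. k \<noteq> a \<Longrightarrow> k \<noteq> b \<Longrightarrow> f k = 0" for f :: "'n \<Rightarrow> 'z::comm_monoid_add"
    proof -
      have "(\<Sum>k\<in>UNIV. f k) = (\<Sum>k\<in>{a,b}. f k)"
        by (rule sum.mono_neutral_right) (auto simp: that)
      then show ?thesis using ab by simp
    qed
    have ipw: "ip u w = 0"
      unfolding ip_def by (subst sw) (auto simp: w_def ab ab[symmetric])
    have "(norm w)^2 = (cmod (u$b))^2 + (cmod (u$a))^2"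
      unfolding norm_vec_def L2_set_def by (subst sw) (auto simp: w_def ab ab[symmetric])
    then have nw: "norm w \<noteq> 0" using False by auto
    define v where "v = (1 / norm w) *\<^sub>R w"
    have "norm v = 1" using nw by (simp add: v_def)
    moreover have "ip u v = 0"
      proof -
      have "ip u v = (1 / norm w) *\<^sub>R ip u w"
        unfolding ip_def v_def by (simp add: scaleR_sum_right)
      then show ?thesis using ipw by simp
    qed
    ultimately show ?thesis by blast
  qed
qed

lemma Dset_nonempty_le:
  assumes "CARD('n) \<ge> 2" "x \<in> CP" "(y::complex^'n^'n) \<in> CP"
  shows "fs_setdist x (Dset y) \<le> pi"
proof -
  obtain u where u: "norm u = 1" "y = proj_of u" using assms(3) unfolding CP_def by auto
  obtain v where v: "norm v = 1" "ip u v = 0" using orth_exists[OF assms(1)] by blast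
  have zCP: "proj_of v \<in> CP" using v unfolding CP_def by auto
  have "fs_dist y (proj_of v) = pi" using u v by (simp add: fs_dist_proj)
  then have zD: "proj_of v \<in> Dset y" using zCP unfolding Dset_def by auto
  have bdd: "bdd_below (fs_dist x ` Dset y)"
    by (rule bdd_belowI[of _ 0]) (auto simp: Dset_def intro: fs_dist_bounds(1)[OF assms(2)])
  have "fs_setdist x (Dset y) \<le> fs_dist x (proj_of v)"
    unfolding fs_setdist_def by (rule cInf_lower[OF _ bdd]) (use zD in auto)
  also have "\<dots> \<le> pi" using fs_dist_bounds(2)[OF assms(2) zCP] .
  finally show ?thesis .
qed

theorem lemma4p2:
  fixes i :: nat and \<epsilon> :: real
  assumes "CARD('n) \<ge> 2"
    and "i > 0" and "\<epsilon> > 0"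
  shows "homotopy_equivalence_map
           (top_of_set (CP \<times> CP \<times> {real i * pi + \<epsilon>}))
           (top_of_set (Zset i :: ((complex^'n^'n) \<times> (complex^'n^'n) \<times> real) set))
           id"
proof -
  define T where "T = real i * pi + \<epsilon>"
  define k where "k = (real i - 1) * pi"
  define c :: "complex^'n^'n \<Rightarrow> complex^'n^'n \<Rightarrow> real" where
    "c x y = (if odd i then fs_dist x y else fs_setdist x (Dset y))" for x y
  define Z where "Z = (Zset i :: ((complex^'n^'n) \<times> (complex^'n^'n) \<times> real) set)"
  define A where "A = (CP \<times> CP \<times> {T} :: ((complex^'n^'n) \<times> (complex^'n^'n) \<times> real) set)"
  have Zmem: "(x, y, t) \<in> Z \<longleftrightarrow> x \<in> CP \<and> y \<in> CP \<and> c x y < t - k" for x y t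
    unfolding Z_def Zset_def c_def k_def by auto
  have cle: "c x y \<le> pi" if "x \<in> CP" "y \<in> CP" for x y
    using fs_dist_bounds(2)[OF that] Dset_nonempty_le[OF assms(1) that] unfolding c_def by auto
  have Tk: "T - k = pi + \<epsilon>" unfolding T_def k_def by (simp add: algebra_simps)
  have AZ: "A \<subseteq> Z"
  proof
    fix p assume "p \<in> A"
    then obtain x y where p: "p = (x, y, T)" "x \<in> CP" "y \<in> CP" unfolding A_def by auto
    show "p \<in> Z" using p cle[OF p(2,3)] Tk assms(3) Zmem by auto
  qed
  define g where "g = (\<lambda>p::(complex^'n^'n) \<times> (complex^'n^'n) \<times> real. (fst p, fst (snd p), T))"
  have gA: "g \<in> Z \<rightarrow> A"
  proof
    fix p assume "p \<in> Z"
    then obtain x y t where "p = (x, y, t)" "x \<in> CP" "y \<in> CP" using Zmem by (metis prod_cases3)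
    then show "g p \<in> A" unfolding g_def A_def by auto
  qed
  have gc: "continuous_on Z g" unfolding g_def by (intro continuous_intros)
  have seg: "closed_segment ((id \<circ> g) p) (id p) \<subseteq> Z" if "p \<in> Z" for p
  proof
    fix q assume q: "q \<in> closed_segment ((id \<circ> g) p) (id p)"
    obtain x y t where p: "p = (x, y, t)" by (metis prod_cases3)
    have xy: "x \<in> CP" "y \<in> CP" "c x y < t - k" using that p Zmem by auto
    have cT: "c x y < T - k" using cle[OF xy(1,2)] Tk assms(3) by auto
    obtain u where u: "0 \<le> u" "u \<le> 1" "q = (1 - u) *\<^sub>R (x, y, T) + u *\<^sub>R (x, y, t)"
      using q p unfolding in_segment g_def by auto
    have qe: "q = (x, y, (1 - u) * T + u * t)" using u(3) by (simp add: algebra_simps)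
    define m where "m = min (T - k) (t - k)"
    have "(1 - u) * m \<le> (1 - u) * (T - k)" using u by (intro mult_left_mono) (auto simp: m_def)
    moreover have "u * m \<le> u * (t - k)" using u by (intro mult_left_mono) (auto simp: m_def)
    moreover have "c x y < m" using cT xy(3) by (simp add: m_def)
    ultimately have "c x y < (1 - u) * T + u * t - k" by (simp add: algebra_simps)
    then show "q \<in> Z" using qe xy Zmem by auto
  qed
  have "homotopic_with (\<lambda>_. True) (top_of_set Z) (top_of_set Z) (id \<circ> g) id"
    by (rule homotopic_with_linear) (use gc seg in \<open>auto intro: continuous_intros\<close>)
  moreover have "homotopic_with (\<lambda>_. True) (top_of_set A) (top_of_set A) (g \<circ> id) id"
    by (rule homotopic_with_id2) (auto simp: A_def g_def)
  moreover have "continuous_map (top_of_set Z) (top_of_set A) g" using gc gA by simp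
  moreover have "continuous_map (top_of_set A) (top_of_set Z) id" using AZ by (auto intro: continuous_intros)
  ultimately show ?thesis unfolding homotopy_equivalence_map_def A_def Z_def T_def by blast
qed

end
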